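(* Let $((\beta_\ell,B_\ell))_{\ell\ge1}$ be a sequence with $\beta_\ell$ and $B_\ell$ non-increasing, $\beta_\ell\ge\beta_c$, $B_\ell>0$, $\beta_\ell\searrow\beta_c$ and $B_\ell\searrow0$. Then $\lim_{\ell\to\infty}z^*(\beta_\ell,B_\ell)=0$. In particular $\lim_{B\searrow0}z^*(\beta_c,B)=0$ and $\lim_{\beta\searrow\beta_c}z^*(\beta,0^+)=0$, where $z^*(\beta,0^+)=\lim_{B\searrow0}z^*(\beta,B)$.
   Context: $W\ge0$ is a random variable with $\mathbb E[W^2]<\infty$ and $\mathbb E[W]>0$; $\nu=\mathbb E[W^2]/\mathbb E[W]$, $\beta_c={\rm asinh}(1/\nu)$, $\alpha(\beta)=\sqrt{\sinh(\beta)/\mathbb E[W]}$. For $B>0$, $z^*(\beta,B)$ denotes the unique positive solution $z$ of $z=\mathbb E[\tanh(\alpha(\beta)Wz+B)\,\alpha(\beta)W]$; it is non-negative and monotone (non-decreasing) in $\beta$ and $B$. *)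

theory Defs
  imports "HOL-Probability.Probability"
begin

definition EW :: "'a measure \<Rightarrow> ('a \<Rightarrow> real) \<Rightarrow> real" where
  "EW M W = (\<integral>x. W x \<partial>M)"

definition nu :: "'a measure \<Rightarrow> ('a \<Rightarrow> real) \<Rightarrow> real" where
  "nu M W = (\<integral>x. (W x)\<^sup>2 \<partial>M) / EW M W"

definition betac :: "'a measure \<Rightarrow> ('a \<Rightarrow> real) \<Rightarrow> real" where
  "betac M W = arsinh (1 / nu M W)"

definition alpha :: "'a measure \<Rightarrow> ('a \<Rightarrow> real) \<Rightarrow> real \<Rightarrow> real" where
  "alpha M W \<beta> = sqrt (sinh \<beta> / EW M W)"

definition zstar :: "'a measure \<Rightarrow> ('a \<Rightarrow> real) \<Rightarrow> real \<Rightarrow> real \<Rightarrow> real" where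
  "zstar M W \<beta> B = (THE z. z > 0 \<and>
      z = (\<integral>x. tanh (alpha M W \<beta> * W x * z + B) * (alpha M W \<beta> * W x) \<partial>M))"

definition zstar0 :: "'a measure \<Rightarrow> ('a \<Rightarrow> real) \<Rightarrow> real \<Rightarrow> real" where
  "zstar0 M W \<beta> = Lim (at_right 0) (\<lambda>B. zstar M W \<beta> B)"

end

theory Submission
  imports Defs
begin
lemma tanh_lip: fixes x y :: real assumes "x \<le> y" shows "tanh y - tanh x \<le> y - x"
proof -
  have "(\<lambda>t. t - tanh t) x \<le> (\<lambda>t. t - tanh t) y"
    apply (rule DERIV_nonneg_imp_increasing_open[OF assms])
     apply (rule exI[of _ "tanh _ ^ 2"])
    by (auto intro!: derivative_eq_intros continuous_intros)
  then show ?thesis by simp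
qed

lemma tanh_lip_strict: fixes x y :: real assumes "0 \<le> x" "x < y" shows "tanh y - tanh x < y - x"
proof -
  have "(\<lambda>t. t - tanh t) x < (\<lambda>t. t - tanh t) y"
    apply (rule DERIV_pos_imp_increasing_open[OF assms(2)])
    apply (rule exI[of _ "tanh _ ^ 2"])
    using assms by (auto intro!: derivative_eq_intros continuous_intros)
  then show ?thesis by simp
qed

lemma tanh_abs_lip: fixes x y :: real shows "\<bar>tanh y - tanh x\<bar> \<le> \<bar>y - x\<bar>"
  using tanh_lip[of x y] tanh_lip[of y x]
  by (cases "x \<le> y") (auto simp: abs_if)

lemma tanh_concave: "convex_on {0..} (\<lambda>x::real. - tanh x)"
  apply (rule convex_on_realI[where f'="\<lambda>x. tanh x ^ 2 - 1"])
    apply simp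
   apply (auto intro!: derivative_eq_intros)[1]
  apply (simp add: power_mono)
  done

lemma tanh_ratio:
  fixes a B z1 z2 :: real
  assumes "a \<ge> 0" "B > 0" "0 < z1" "z1 < z2"
  shows "z1 * tanh (a * z2 + B) < z2 * tanh (a * z1 + B)"
proof -
  define t where "t = z1 / z2"
  have t: "0 \<le> t" "t \<le> 1" using assms by (auto simp: t_def)
  have eq: "(1 - t) * B + t * (a * z2 + B) = a * z1 + B"
    using assms by (simp add: t_def field_simps)
  have "- tanh ((1 - t) * B + t * (a * z2 + B)) \<le> (1 - t) * - tanh B + t * - tanh (a * z2 + B)"
    using convex_onD[OF tanh_concave, of t B "a * z2 + B"] t assms by (auto intro!: add_nonneg_nonneg mult_nonneg_nonneg)
  then have "tanh (a * z1 + B) \<ge> (1 - t) * tanh B + t * tanh (a * z2 + B)" using eq by simp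
  moreover have "(1 - t) * tanh B > 0" using assms by (simp add: t_def)
  ultimately have "tanh (a * z1 + B) > t * tanh (a * z2 + B)" by linarith
  then have "z2 * tanh (a * z1 + B) > z2 * (t * tanh (a * z2 + B))" using assms by simp
  then show ?thesis using assms by (simp add: t_def)
qed


definition FF :: "'a measure \<Rightarrow> ('a \<Rightarrow> real) \<Rightarrow> real \<Rightarrow> real \<Rightarrow> real \<Rightarrow> real" where
  "FF M W a B z = (\<integral>x. tanh (a * W x * z + B) * (a * W x) \<partial>M)"

locale setupW =
  fixes M :: "'a measure" and W :: "'a \<Rightarrow> real"
  assumes P: "prob_space M"
    and Wm[measurable]: "W \<in> borel_measurable M"
    and Wnn: "AE x in M. W x \<ge> 0"
    and W2: "integrable M (\<lambda>x. (W x)\<^sup>2)"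
    and EWp: "EW M W > 0"
begin

interpretation prob_space M by (rule P)

lemma Wint: "integrable M W"
  using square_integrable_imp_integrable[OF Wm W2] .

lemma Fint: "integrable M (\<lambda>x. tanh (a * W x * z + B) * (a * W x))"
proof (rule Bochner_Integration.integrable_bound[where f="\<lambda>x. a * W x"])
  show "integrable M (\<lambda>x. a * W x)" using Wint by simp
  show "(\<lambda>x. tanh (a * W x * z + B) * (a * W x)) \<in> borel_measurable M"
    by (intro borel_measurable_times borel_measurable_continuous_on[where f=tanh] continuous_intros) auto
  show "AE x in M. norm (tanh (a * W x * z + B) * (a * W x)) \<le> norm (a * W x)"
  proof (rule AE_I2)
    fix x
    have "\<bar>tanh (a * W x * z + B)\<bar> \<le> 1" using tanh_real_bounds[of "a * W x * z + B"] by auto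
    then show "norm (tanh (a * W x * z + B) * (a * W x)) \<le> norm (a * W x)"
      by (simp add: abs_mult mult_left_le_one_le)
  qed
qed

lemma Apos: "emeasure M {x\<in>space M. W x > 0} \<noteq> 0"
proof
  assume "emeasure M {x\<in>space M. W x > 0} = 0"
  then have "AE x in M. \<not> W x > 0"
    by (intro AE_I[where N="{x\<in>space M. W x > 0}"]) auto
  then have "AE x in M. W x = 0" using Wnn by eventually_elim auto
  then have "EW M W = 0" unfolding EW_def by (simp add: integral_eq_zero_AE)
  then show False using EWp by simp
qed

lemma Asets: "{x\<in>space M. W x > 0} \<in> sets M" by measurable

lemma ratio:
  assumes "a > 0" "B > 0" "0 < z1" "z1 < z2"
  shows "z1 * FF M W a B z2 < z2 * FF M W a B z1"
proof -
  have "(\<integral>x. z1 * (tanh (a * W x * z2 + B) * (a * W x)) \<partial>M)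
      < (\<integral>x. z2 * (tanh (a * W x * z1 + B) * (a * W x)) \<partial>M)"
  proof (rule integral_less_AE[OF _ _ Apos Asets])
    show "integrable M (\<lambda>x. z1 * (tanh (a * W x * z2 + B) * (a * W x)))" using Fint by simp
    show "integrable M (\<lambda>x. z2 * (tanh (a * W x * z1 + B) * (a * W x)))" using Fint by simp
    show "AE x in M. x \<in> {x\<in>space M. W x > 0} \<longrightarrow>
      z1 * (tanh (a * W x * z2 + B) * (a * W x)) \<noteq> z2 * (tanh (a * W x * z1 + B) * (a * W x))"
    proof (rule AE_I2, rule impI)
      fix x assume "x \<in> {x\<in>space M. W x > 0}"
      then have w: "W x > 0" by simp
      have "z1 * tanh ((a * W x) * z2 + B) < z2 * tanh ((a * W x) * z1 + B)"
        using tanh_ratio[of "a * W x" B z1 z2] assms w by simp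
      then have "z1 * tanh ((a * W x) * z2 + B) * (a * W x) < z2 * tanh ((a * W x) * z1 + B) * (a * W x)"
        using assms w by (intro mult_strict_right_mono) auto
      then show "z1 * (tanh (a * W x * z2 + B) * (a * W x)) \<noteq> z2 * (tanh (a * W x * z1 + B) * (a * W x))"
        by (metis less_irrefl mult.assoc mult.commute)
    qed
    show "AE x in M. z1 * (tanh (a * W x * z2 + B) * (a * W x)) \<le> z2 * (tanh (a * W x * z1 + B) * (a * W x))"
      using Wnn
    proof eventually_elim
      case (elim x)
      have "z1 * tanh ((a * W x) * z2 + B) \<le> z2 * tanh ((a * W x) * z1 + B)"
        using tanh_ratio[of "a * W x" B z1 z2] assms elim by simp
      then have "z1 * tanh ((a * W x) * z2 + B) * (a * W x) \<le> z2 * tanh ((a * W x) * z1 + B) * (a * W x)"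
        using assms elim by (intro mult_right_mono) auto
      then show ?case by (simp add: mult.assoc mult.commute mult.left_commute)
    qed
  qed
  then show ?thesis unfolding FF_def by simp
qed


lemma F_le: assumes "a \<ge> 0" shows "FF M W a B z \<le> a * EW M W"
proof -
  have "FF M W a B z \<le> (\<integral>x. a * W x \<partial>M)"
    unfolding FF_def
  proof (rule integral_mono_AE[OF Fint])
    show "integrable M (\<lambda>x. a * W x)" using Wint by simp
    show "AE x in M. tanh (a * W x * z + B) * (a * W x) \<le> a * W x"
      using Wnn
    proof eventually_elim
      case (elim x)
      have "tanh (a * W x * z + B) \<le> 1" using tanh_real_lt_1 less_imp_le by blast
      then have "tanh (a * W x * z + B) * (a * W x) \<le> 1 * (a * W x)"
        using elim assms by (intro mult_right_mono) auto
      then show ?case by simp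
    qed
  qed
  then show ?thesis using Wint by (simp add: EW_def)
qed

lemma F_0: "FF M W a B 0 = tanh B * a * EW M W"
  unfolding FF_def EW_def using Wint by simp

lemma F_lip: assumes "a \<ge> 0"
  shows "FF M W a B z - FF M W a B z' \<le> a\<^sup>2 * (\<integral>x. (W x)\<^sup>2 \<partial>M) * \<bar>z - z'\<bar>"
proof -
  have "FF M W a B z - FF M W a B z' = (\<integral>x. tanh (a * W x * z + B) * (a * W x) - tanh (a * W x * z' + B) * (a * W x) \<partial>M)"
    unfolding FF_def using Fint by simp
  also have "\<dots> \<le> (\<integral>x. (a\<^sup>2 * \<bar>z - z'\<bar>) * (W x)\<^sup>2 \<partial>M)"
  proof (rule integral_mono_AE)
    show "integrable M (\<lambda>x. tanh (a * W x * z + B) * (a * W x) - tanh (a * W x * z' + B) * (a * W x))"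
      using Fint by simp
    show "integrable M (\<lambda>x. (a\<^sup>2 * \<bar>z - z'\<bar>) * (W x)\<^sup>2)" using W2 by simp
    show "AE x in M. tanh (a * W x * z + B) * (a * W x) - tanh (a * W x * z' + B) * (a * W x)
        \<le> (a\<^sup>2 * \<bar>z - z'\<bar>) * (W x)\<^sup>2"
      using Wnn
    proof eventually_elim
      case (elim x)
      have "tanh (a * W x * z + B) - tanh (a * W x * z' + B) \<le> \<bar>(a * W x * z + B) - (a * W x * z' + B)\<bar>"
        using tanh_abs_lip[of "a * W x * z' + B" "a * W x * z + B"] by linarith
      also have "\<dots> = (a * W x) * \<bar>z - z'\<bar>"
        using elim assms by (simp add: abs_mult right_diff_distrib[symmetric])
      finally have "(tanh (a * W x * z + B) - tanh (a * W x * z' + B)) * (a * W x) \<le> ((a * W x) * \<bar>z - z'\<bar>) * (a * W x)"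
        using elim assms by (intro mult_right_mono) auto
      then show ?case by (simp add: power2_eq_square algebra_simps)
    qed
  qed
  also have "\<dots> = a\<^sup>2 * (\<integral>x. (W x)\<^sup>2 \<partial>M) * \<bar>z - z'\<bar>" using W2 by simp
  finally show ?thesis .
qed

lemma F_cont: assumes "a \<ge> 0" shows "continuous_on S (FF M W a B)"
proof (rule lipschitz_on_continuous_on[where L="a\<^sup>2 * (\<integral>x. (W x)\<^sup>2 \<partial>M)"], rule lipschitz_onI)
  show "0 \<le> a\<^sup>2 * (\<integral>x. (W x)\<^sup>2 \<partial>M)" by simp
  fix x y
  show "dist (FF M W a B x) (FF M W a B y) \<le> a\<^sup>2 * (\<integral>x. (W x)\<^sup>2 \<partial>M) * dist x y"
    using F_lip[OF assms, of B x y] F_lip[OF assms, of B y x]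
    by (auto simp: dist_real_def abs_minus_commute)
qed

lemma F_exists_unique:
  assumes "a > 0" "B > 0"
  shows "\<exists>!z. z > 0 \<and> z = FF M W a B z"
proof -
  define G where "G z = FF M W a B z - z" for z
  have c: "continuous_on {0 .. a * EW M W + 1} G"
    unfolding G_def using F_cont assms by (intro continuous_intros) auto
  have g0: "G 0 > 0" unfolding G_def F_0 using assms EWp by simp
  have g1: "G (a * EW M W + 1) < 0" unfolding G_def using F_le[of a B "a * EW M W + 1"] assms by linarith
  obtain z where z: "0 \<le> z" "z \<le> a * EW M W + 1" "G z = 0"
    using IVT2'[of G "a * EW M W + 1" 0 0, OF less_imp_le[OF g1] less_imp_le[OF g0] _ c] assms EWp by auto
  have zp: "z > 0" using z g0 by (cases "z = 0") auto
  show ?thesis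
  proof (rule ex1I[of _ z])
    show "z > 0 \<and> z = FF M W a B z" using zp z(3) by (simp add: G_def)
    fix y assume y: "y > 0 \<and> y = FF M W a B y"
    show "y = z"
    proof (rule ccontr)
      assume "y \<noteq> z"
      then consider "y < z" | "z < y" by linarith
      then show False
      proof cases
        case 1
        from ratio[OF assms _ 1] y have "y * FF M W a B z < z * FF M W a B y" by simp
        then show False using y z(3) by (simp add: G_def)
      next
        case 2
        from ratio[OF assms zp 2] have "z * FF M W a B y < y * FF M W a B z" .
        then show False using y z(3) by (simp add: G_def mult.commute)
      qed
    qed
  qed
qed


lemma F_monoB: assumes "a \<ge> 0" "B1 \<le> B2" shows "FF M W a B1 z \<le> FF M W a B2 z"
  unfolding FF_def
proof (rule integral_mono_AE[OF Fint Fint])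
  show "AE x in M. tanh (a * W x * z + B1) * (a * W x) \<le> tanh (a * W x * z + B2) * (a * W x)"
    using Wnn by eventually_elim (use assms in \<open>auto intro!: mult_right_mono\<close>)
qed

lemma root_monoB:
  assumes "a > 0" "0 < B1" "B1 \<le> B2" "z1 > 0" "z1 = FF M W a B1 z1" "z2 > 0" "z2 = FF M W a B2 z2"
  shows "z1 \<le> z2"
proof (rule ccontr)
  assume "\<not> z1 \<le> z2"
  then have lt: "z2 < z1" by simp
  have b2: "0 < B2" using assms by simp
  have "z2 * FF M W a B2 z1 < z1 * FF M W a B2 z2"
    using ratio[OF assms(1) b2 assms(6) lt] .
  then have "z2 * FF M W a B2 z1 < z1 * z2" using assms(7) by simp
  moreover have "FF M W a B1 z1 \<le> FF M W a B2 z1" using F_monoB[of a B1 B2 z1] assms(1,3) by simp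
  then have "z1 \<le> FF M W a B2 z1" using assms(5) by simp
  then have "z2 * z1 \<le> z2 * FF M W a B2 z1" using assms(6) by simp
  ultimately show False using assms by (simp add: mult.commute)
qed

definition hh :: "real \<Rightarrow> real" where "hh x = x - tanh x"

lemma hh_mono: "x \<le> y \<Longrightarrow> hh x \<le> hh y" unfolding hh_def using tanh_lip by force
lemma hh_nonneg: "0 \<le> x \<Longrightarrow> 0 \<le> hh x" using hh_mono[of 0 x] by (simp add: hh_def)
lemma hh_pos: "0 < x \<Longrightarrow> 0 < hh x" using tanh_lip_strict[of 0 x] by (simp add: hh_def)

definition dd :: "real \<Rightarrow> real \<Rightarrow> real" where
  "dd ac \<epsilon> = (\<integral>x. ac * W x * hh (ac * W x * \<epsilon>) \<partial>M)"

lemma dd_int: "integrable M (\<lambda>x. ac * W x * hh (ac * W x * \<epsilon>))"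
proof -
  have "integrable M (\<lambda>x. (ac\<^sup>2 * \<epsilon>) * (W x)\<^sup>2 - tanh (ac * W x * \<epsilon> + 0) * (ac * W x))"
    using W2 Fint[of ac \<epsilon> 0] by (intro Bochner_Integration.integrable_diff) auto
  then show ?thesis by (simp add: hh_def power2_eq_square algebra_simps)
qed

lemma dd_pos: assumes "ac > 0" "\<epsilon> > 0" shows "dd ac \<epsilon> > 0"
proof -
  have "(\<integral>x. 0 \<partial>M) < dd ac \<epsilon>" unfolding dd_def
  proof (rule integral_less_AE[OF _ dd_int Apos Asets])
    show "integrable M (\<lambda>x. 0::real)" by simp
    show "AE x in M. x \<in> {x \<in> space M. 0 < W x} \<longrightarrow> 0 \<noteq> ac * W x * hh (ac * W x * \<epsilon>)"
    proof (intro AE_I2 impI)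
      fix x assume "x \<in> {x \<in> space M. 0 < W x}"
      then have "0 < ac * W x * \<epsilon>" using assms by simp
      then have "0 < hh (ac * W x * \<epsilon>)" by (rule hh_pos)
      moreover have "0 < ac * W x" using \<open>x \<in> _\<close> assms by simp
      ultimately have "0 < ac * W x * hh (ac * W x * \<epsilon>)" by simp
      then show "0 \<noteq> ac * W x * hh (ac * W x * \<epsilon>)" by linarith
    qed
    show "AE x in M. 0 \<le> ac * W x * hh (ac * W x * \<epsilon>)"
      using Wnn by eventually_elim (use assms in \<open>auto intro!: hh_nonneg mult_nonneg_nonneg\<close>)
  qed
  then show ?thesis by simp
qed

lemma key_ineq:
  assumes "ac > 0" "\<epsilon> > 0" "a \<ge> ac" "B > 0" "z \<ge> \<epsilon>" "z = FF M W a B z"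
  shows "dd ac \<epsilon> \<le> (a\<^sup>2 * (\<integral>x. (W x)\<^sup>2 \<partial>M) - 1) * z + B * a * EW M W"
proof -
  have "z \<le> (\<integral>x. (a\<^sup>2 * z) * (W x)\<^sup>2 + (a * B) * W x - ac * W x * hh (ac * W x * \<epsilon>) \<partial>M)"
    apply (subst assms(6)) unfolding FF_def
  proof (rule integral_mono_AE[OF Fint])
    show "integrable M (\<lambda>x. (a\<^sup>2 * z) * (W x)\<^sup>2 + (a * B) * W x - ac * W x * hh (ac * W x * \<epsilon>))"
      using W2 Wint dd_int by auto
    show "AE x in M. tanh (a * W x * z + B) * (a * W x)
        \<le> (a\<^sup>2 * z) * (W x)\<^sup>2 + (a * B) * W x - ac * W x * hh (ac * W x * \<epsilon>)"
      using Wnn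
    proof eventually_elim
      case (elim x)
      have aw: "0 \<le> a * W x" using elim assms by simp
      have "tanh (a * W x * z + B) \<le> tanh (a * W x * z) + B"
        using tanh_lip[of "a * W x * z" "a * W x * z + B"] assms by simp
      also have "\<dots> = a * W x * z - hh (a * W x * z) + B" by (simp add: hh_def)
      finally have 1: "tanh (a * W x * z + B) * (a * W x) \<le> (a * W x * z - hh (a * W x * z) + B) * (a * W x)"
        using aw by (intro mult_right_mono) auto
      have "ac * W x * \<epsilon> \<le> a * W x * z" using elim assms
        by (intro mult_mono) (auto intro!: mult_right_mono)
      then have h1: "hh (ac * W x * \<epsilon>) \<le> hh (a * W x * z)" by (rule hh_mono)
      have h0: "0 \<le> hh (ac * W x * \<epsilon>)" using elim assms by (intro hh_nonneg) auto
      have "ac * W x * hh (ac * W x * \<epsilon>) \<le> a * W x * hh (a * W x * z)"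
        using elim assms h1 h0 by (intro mult_mono) (auto intro!: mult_right_mono)
      with 1 show ?case by (simp add: power2_eq_square algebra_simps)
    qed
  qed
  also have "\<dots> = a\<^sup>2 * z * (\<integral>x. (W x)\<^sup>2 \<partial>M) + a * B * EW M W - dd ac \<epsilon>"
    using W2 Wint dd_int by (simp add: EW_def dd_def)
  finally show ?thesis by (simp add: algebra_simps)
qed


lemma E2pos: "(\<integral>x. (W x)\<^sup>2 \<partial>M) > 0"
proof -
  have ge: "(\<integral>x. (W x)\<^sup>2 \<partial>M) \<ge> 0" by (rule integral_nonneg_AE) simp
  have "(\<integral>x. (W x)\<^sup>2 \<partial>M) \<noteq> 0"
  proof
    assume "(\<integral>x. (W x)\<^sup>2 \<partial>M) = 0"
    then have "AE x in M. (W x)\<^sup>2 = 0" using integral_nonneg_eq_0_iff_AE[OF W2] by simp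
    then have "AE x in M. W x = 0" by eventually_elim simp
    then have "EW M W = 0" unfolding EW_def by (simp add: integral_eq_zero_AE)
    then show False using EWp by simp
  qed
  with ge show ?thesis by linarith
qed

lemma bc_pos: "betac M W > 0"
  unfolding betac_def nu_def using E2pos EWp by simp

lemma alpha_pos: "\<beta> > 0 \<Longrightarrow> alpha M W \<beta> > 0"
  unfolding alpha_def using EWp by simp

lemma alpha_mono: "\<beta> \<le> \<beta>' \<Longrightarrow> alpha M W \<beta> \<le> alpha M W \<beta>'"
  unfolding alpha_def using EWp by (simp add: divide_right_mono)

lemma alpha_sq: "\<beta> \<ge> 0 \<Longrightarrow> (alpha M W \<beta>)\<^sup>2 = sinh \<beta> / EW M W"
  unfolding alpha_def using EWp by simp

lemma ac_sq: "(alpha M W (betac M W))\<^sup>2 * (\<integral>x. (W x)\<^sup>2 \<partial>M) = 1"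
proof -
  have "(alpha M W (betac M W))\<^sup>2 = 1 / (\<integral>x. (W x)\<^sup>2 \<partial>M)"
  proof -
    have "0 \<le> betac M W" using bc_pos by simp
    from alpha_sq[OF this] have "(alpha M W (betac M W))\<^sup>2 = sinh (betac M W) / EW M W" .
    also have "sinh (betac M W) = EW M W / (\<integral>x. (W x)\<^sup>2 \<partial>M)" by (simp add: betac_def nu_def)
    finally show ?thesis using EWp by simp
  qed
  then show ?thesis using E2pos by simp
qed

lemma zstar_spec:
  assumes "\<beta> > 0" "B > 0"
  shows "zstar M W \<beta> B > 0 \<and> zstar M W \<beta> B = FF M W (alpha M W \<beta>) B (zstar M W \<beta> B)"
proof -
  have "zstar M W \<beta> B = (THE z. z > 0 \<and> z = FF M W (alpha M W \<beta>) B z)"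
    unfolding zstar_def FF_def ..
  then show ?thesis using theI'[OF F_exists_unique[OF alpha_pos[OF assms(1)] assms(2)]] by simp
qed

lemma zstar_monoB:
  assumes "\<beta> > 0" "0 < B1" "B1 \<le> B2"
  shows "zstar M W \<beta> B1 \<le> zstar M W \<beta> B2"
  using zstar_spec[OF assms(1) assms(2)] zstar_spec[OF assms(1), of B2] assms
  by (intro root_monoB[OF alpha_pos[OF assms(1)] assms(2,3)]) auto

lemma key:
  assumes "\<epsilon> > 0"
  shows "\<exists>\<eta>>0. \<forall>\<beta> B. betac M W \<le> \<beta> \<and> \<beta> < betac M W + \<eta> \<and> 0 < B \<and> B < \<eta> \<longrightarrow>
           0 < zstar M W \<beta> B \<and> zstar M W \<beta> B < \<epsilon>"
proof -
  define bc where "bc = betac M W"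
  define E2 where "E2 = (\<integral>x. (W x)\<^sup>2 \<partial>M)"
  define ac where "ac = alpha M W bc"
  define \<delta> where "\<delta> = dd ac \<epsilon>"
  define K where "K = alpha M W (bc + 1) * EW M W"
  have bc: "bc > 0" using bc_pos by (simp add: bc_def)
  have E2: "E2 > 0" using E2pos by (simp add: E2_def)
  have ac: "ac > 0" using alpha_pos bc by (simp add: ac_def)
  have \<delta>: "\<delta> > 0" using dd_pos[OF ac assms] by (simp add: \<delta>_def)
  have K: "K > 0" using alpha_pos[of "bc+1"] bc EWp by (simp add: K_def)
  define c where "c = \<delta> * EW M W / (2 * E2 * K)"
  have c: "c > 0" using \<delta> EWp E2 K by (simp add: c_def)
  from isCont_sinh[of bc] obtain d where d: "d > 0"
    "\<And>x. x \<noteq> bc \<and> norm (x - bc) < d \<Longrightarrow> norm (sinh x - sinh bc) < c"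
    unfolding isCont_def LIM_eq using c by blast
  define \<eta> where "\<eta> = min (min 1 d) (\<delta> / (2 * K))"
  have \<eta>: "\<eta> > 0" using d \<delta> K by (simp add: \<eta>_def)
  show ?thesis
  proof (rule exI[of _ \<eta>], intro conjI allI impI)
    show "\<eta> > 0" by (rule \<eta>)
    fix \<beta> B assume H: "betac M W \<le> \<beta> \<and> \<beta> < betac M W + \<eta> \<and> 0 < B \<and> B < \<eta>"
    have b0: "\<beta> > 0" using H bc by (simp add: bc_def)
    have B0: "B > 0" using H by simp
    note zs = zstar_spec[OF b0 B0]
    show "0 < zstar M W \<beta> B" using zs H by simp
    show "zstar M W \<beta> B < \<epsilon>"
    proof (rule ccontr)
      assume "\<not> zstar M W \<beta> B < \<epsilon>"
      then have ze: "zstar M W \<beta> B \<ge> \<epsilon>" by simp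
      define a where "a = alpha M W \<beta>"
      define z where "z = zstar M W \<beta> B"
      have aac: "a \<ge> ac" unfolding a_def ac_def bc_def using H by (intro alpha_mono) simp
      have aK: "a * EW M W \<le> K" unfolding a_def K_def using H EWp \<eta>_def
        by (intro mult_right_mono alpha_mono) (auto simp: bc_def)
      have z: "z = FF M W a B z" using zs by (simp add: a_def z_def)
      have zK: "z \<le> K" using F_le[of a B z] z aK ac aac by linarith
      have ineq: "\<delta> \<le> (a\<^sup>2 * E2 - 1) * z + B * a * EW M W"
        using key_ineq[OF ac assms aac _ _ z] H ze by (simp add: \<delta>_def E2_def z_def)
      have a2: "a\<^sup>2 * E2 - 1 = (sinh \<beta> - sinh bc) * E2 / EW M W"
      proof -
        have "a\<^sup>2 = sinh \<beta> / EW M W" unfolding a_def using alpha_sq b0 by simp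
        moreover have h1: "ac\<^sup>2 * E2 = 1" using ac_sq by (simp add: ac_def bc_def E2_def)
        moreover have h2: "ac\<^sup>2 = sinh bc / EW M W" unfolding ac_def using alpha_sq bc by simp
        ultimately have "sinh bc / EW M W * E2 = 1" using h1[unfolded h2] by simp
        then have "a\<^sup>2 * E2 - 1 = sinh \<beta> / EW M W * E2 - sinh bc / EW M W * E2"
          using \<open>a\<^sup>2 = _\<close> E2 bc by simp
        then show ?thesis by (simp add: left_diff_distrib diff_divide_distrib)
      qed
      have sb: "sinh \<beta> - sinh bc < c"
      proof (cases "\<beta> = bc")
        case True then show ?thesis using c by simp
      next
        case False
        have "norm (\<beta> - bc) < d" using H \<eta>_def by (auto simp: bc_def)
        then show ?thesis using d(2)[of \<beta>] False by auto
      qed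
      have sb0: "sinh \<beta> - sinh bc \<ge> 0" using H by (simp add: bc_def)
      have "(a\<^sup>2 * E2 - 1) * z \<le> (a\<^sup>2 * E2 - 1) * K"
        using zK a2 sb0 E2 EWp by (intro mult_left_mono) auto
      also have "\<dots> < c * E2 / EW M W * K"
        unfolding a2 using sb E2 EWp K by (intro mult_strict_right_mono divide_strict_right_mono) auto
      also have "\<dots> = \<delta> / 2" unfolding c_def using E2 EWp K by (simp add: field_simps)
      finally have 1: "(a\<^sup>2 * E2 - 1) * z < \<delta> / 2" .
      have "B * a * EW M W \<le> B * K" using aK H by (simp add: mult.assoc)
      also have "\<dots> < \<delta> / (2 * K) * K" using H K \<eta>_def by (intro mult_strict_right_mono) auto
      also have "\<dots> = \<delta> / 2" using K by simp
      finally show False using 1 ineq by linarith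
    qed
  qed
qed

end

theorem mainTheorem5:
  fixes M :: "'a measure" and W :: "'a \<Rightarrow> real"
    and \<beta> B :: "nat \<Rightarrow> real"
  assumes "prob_space M"
    and "W \<in> borel_measurable M"
    and "AE x in M. W x \<ge> 0"
    and "integrable M (\<lambda>x. (W x)\<^sup>2)"
    and "EW M W > 0"
    and "decseq \<beta>" and "decseq B"
    and "\<And>l. \<beta> l \<ge> betac M W"
    and "\<And>l. B l > 0"
    and "\<beta> \<longlonglongrightarrow> betac M W"
    and "B \<longlonglongrightarrow> 0"
  shows "((\<lambda>l. zstar M W (\<beta> l) (B l)) \<longlonglongrightarrow> 0)
    \<and> ((\<lambda>b. zstar M W (betac M W) b) \<longlongrightarrow> 0) (at_right 0)
    \<and> ((\<lambda>b. zstar0 M W b) \<longlongrightarrow> 0) (at_right (betac M W))"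
proof -
  interpret S: setupW M W by (intro setupW.intro assms(1-5))
  have C1: "((\<lambda>l. zstar M W (\<beta> l) (B l)) \<longlonglongrightarrow> 0)"
  proof (rule tendstoI)
    fix e :: real assume e: "e > 0"
    obtain \<eta> where \<eta>: "\<eta> > 0" and H: "\<And>b c. betac M W \<le> b \<and> b < betac M W + \<eta> \<and> 0 < c \<and> c < \<eta> \<Longrightarrow>
           0 < zstar M W b c \<and> zstar M W b c < e"
      using S.key[OF e] by blast
    have ev1: "eventually (\<lambda>l. \<beta> l < betac M W + \<eta>) sequentially"
      using order_tendstoD(2)[OF assms(10)] \<eta> by simp
    have ev2: "eventually (\<lambda>l. B l < \<eta>) sequentially"
      using order_tendstoD(2)[OF assms(11)] \<eta> by simp
    from ev1 ev2 show "eventually (\<lambda>l. dist (zstar M W (\<beta> l) (B l)) 0 < e) sequentially"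
    proof eventually_elim
      case (elim l)
      then show ?case using H[of "\<beta> l" "B l"] assms(8,9)[of l] by simp
    qed
  qed
  have C2: "((\<lambda>b. zstar M W (betac M W) b) \<longlongrightarrow> 0) (at_right 0)"
  proof (rule tendstoI)
    fix e :: real assume e: "e > 0"
    obtain \<eta> where \<eta>: "\<eta> > 0" and H: "\<And>b c. betac M W \<le> b \<and> b < betac M W + \<eta> \<and> 0 < c \<and> c < \<eta> \<Longrightarrow>
           0 < zstar M W b c \<and> zstar M W b c < e"
      using S.key[OF e] by blast
    show "eventually (\<lambda>b. dist (zstar M W (betac M W) b) 0 < e) (at_right 0)"
      using eventually_at_right_real[OF \<eta>]
    proof eventually_elim
      case (elim c)
      then show ?case using H[of "betac M W" c] \<eta> by simp
    qed
  qed
  have C3: "((\<lambda>b. zstar0 M W b) \<longlongrightarrow> 0) (at_right (betac M W))"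
  proof (rule tendstoI)
    fix e :: real assume e: "e > 0"
    obtain \<eta> where \<eta>: "\<eta> > 0" and H: "\<And>b c. betac M W \<le> b \<and> b < betac M W + \<eta> \<and> 0 < c \<and> c < \<eta> \<Longrightarrow>
           0 < zstar M W b c \<and> zstar M W b c < e / 2"
      using S.key[of "e/2"] e by auto
    have "betac M W < betac M W + \<eta>" using \<eta> by simp
    show "eventually (\<lambda>b. dist (zstar0 M W b) 0 < e) (at_right (betac M W))"
      using eventually_at_right_real[OF \<open>betac M W < betac M W + \<eta>\<close>]
    proof eventually_elim
      case (elim b)
      have b0: "b > 0" using elim S.bc_pos by simp
      define L where "L = Inf (zstar M W b ` ({0<..} \<inter> UNIV))"
      have lim0: "(zstar M W b \<longlongrightarrow> L) (at 0 within ({0<..} \<inter> UNIV))"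
        unfolding L_def
        by (rule Lim_right_bound[where K=0]) (auto intro: S.zstar_monoB[OF b0] less_imp_le[OF conjunct1[OF S.zstar_spec[OF b0]]])
      then have lim: "(zstar M W b \<longlongrightarrow> L) (at_right 0)" by simp
      have z0: "zstar0 M W b = L" unfolding zstar0_def using tendsto_Lim[OF _ lim] by simp
      have "L \<le> e / 2"
      proof (rule tendsto_upperbound[OF lim _ trivial_limit_at_right_real])
        show "eventually (\<lambda>c. zstar M W b c \<le> e / 2) (at_right 0)"
          using eventually_at_right_real[OF \<eta>]
          by eventually_elim (use H[of b] elim in \<open>auto intro: less_imp_le\<close>)
      qed
      moreover have "0 \<le> L"
      proof (rule tendsto_lowerbound[OF lim _ trivial_limit_at_right_real])
        show "eventually (\<lambda>c. 0 \<le> zstar M W b c) (at_right 0)"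
          using eventually_at_right_real[OF \<eta>]
          by eventually_elim (use H[of b] elim in \<open>auto intro: less_imp_le\<close>)
      qed
      ultimately show ?case using z0 e by simp
    qed
  qed
  show ?thesis using C1 C2 C3 by blast
qed

end
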